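(* Let $\mathcal D$ be a Dirac operator acting on sections of a bundle $\mathbb S$ over a closed Riemannian manifold. Suppose there are a constant $\delta_4\ge0$, smooth sections $\psi_1,\dots,\psi_L$ of $\mathbb S$ and real numbers $\mu_1,\dots,\mu_L$ such that: (i) $\{\psi_l\}_{l=1}^L$ is orthonormal in $L^2$; (ii) $\int|\mathcal D\psi_l-\mu_l\psi_l|^2\le\delta_4$ for all $l$; (iii) $\int\langle\mathcal D\psi_l,\psi_{l'}\rangle=0$ for all $l\ne l'$; (iv) $\sum_{1\le l,l'\le L,\ l\ne l'}\big|\int\langle\mathcal D\psi_l,\mathcal D\psi_{l'}\rangle\big|\le\delta_4$. Then there exist $L$ eigenvalues $\lambda_1,\dots,\lambda_L$ of $\mathcal D$ (counted with multiplicity) such that $|\lambda_l-\mu_l|\le\sqrt{2\delta_4}$ for all $l$.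
   Context: A Dirac operator here is a first-order self-adjoint elliptic operator of Dirac type; on a closed manifold it has discrete real spectrum with finite multiplicities, and integrals are over the manifold with respect to the Riemannian volume form. *)

theory Defs
  imports Complex_Main
begin

text \<open>Smooth sections of the (complex) bundle form a complex vector space V, realised as a
space of complex-valued functions on an abstract index type 's (every complex vector
space embeds this way).  The L2 inner product  (phi, psi) = integral of pointwise
Hermitian product  is a Hermitian form h on V (linear in the first argument).\<close>

definition cscale :: "complex \<Rightarrow> ('s \<Rightarrow> complex) \<Rightarrow> ('s \<Rightarrow> complex)" where
  "cscale c x = (\<lambda>s. c * x s)"

definition cdiff :: "('s \<Rightarrow> complex) \<Rightarrow> ('s \<Rightarrow> complex) \<Rightarrow> ('s \<Rightarrow> complex)" where
  "cdiff x y = (\<lambda>s. x s - y s)"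

definition cadd :: "('s \<Rightarrow> complex) \<Rightarrow> ('s \<Rightarrow> complex) \<Rightarrow> ('s \<Rightarrow> complex)" where
  "cadd x y = (\<lambda>s. x s + y s)"

definition csubspace :: "('s \<Rightarrow> complex) set \<Rightarrow> bool" where
  "csubspace V \<longleftrightarrow> (\<lambda>s. 0) \<in> V \<and> (\<forall>x\<in>V. \<forall>y\<in>V. cadd x y \<in> V)
     \<and> (\<forall>c. \<forall>x\<in>V. cscale c x \<in> V)"

definition hermitian_form ::
  "('s \<Rightarrow> complex) set \<Rightarrow> (('s \<Rightarrow> complex) \<Rightarrow> ('s \<Rightarrow> complex) \<Rightarrow> complex) \<Rightarrow> bool" where
  "hermitian_form V h \<longleftrightarrow>
     (\<forall>x\<in>V. \<forall>y\<in>V. \<forall>z\<in>V. h (cadd x y) z = h x z + h y z)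
   \<and> (\<forall>c. \<forall>x\<in>V. \<forall>y\<in>V. h (cscale c x) y = c * h x y)
   \<and> (\<forall>x\<in>V. \<forall>y\<in>V. h x y = cnj (h y x))
   \<and> (\<forall>x\<in>V. Re (h x x) \<ge> 0 \<and> (h x x = 0 \<longrightarrow> x = (\<lambda>s. 0)))"

definition sqnorm :: "(('s \<Rightarrow> complex) \<Rightarrow> ('s \<Rightarrow> complex) \<Rightarrow> complex) \<Rightarrow> ('s \<Rightarrow> complex) \<Rightarrow> real" where
  "sqnorm h x = Re (h x x)"

text \<open>A Dirac-type operator D on V: complex linear, symmetric (formally self-adjoint) and
with the spectral properties of a self-adjoint elliptic operator on a closed manifold:
a complete L2-orthonormal system of smooth eigensections e k with real eigenvalues
lam k, such that each bounded interval contains only finitely many of the lam k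
(discrete spectrum, finite multiplicities).  The eigenvalues counted with multiplicity
are exactly the list lam 0, lam 1, ...\<close>
definition dirac_model ::
  "('s \<Rightarrow> complex) set \<Rightarrow> (('s \<Rightarrow> complex) \<Rightarrow> ('s \<Rightarrow> complex) \<Rightarrow> complex)
   \<Rightarrow> (('s \<Rightarrow> complex) \<Rightarrow> ('s \<Rightarrow> complex)) \<Rightarrow> (nat \<Rightarrow> ('s \<Rightarrow> complex)) \<Rightarrow> (nat \<Rightarrow> real) \<Rightarrow> bool" where
  "dirac_model V h D e lam \<longleftrightarrow>
     csubspace V \<and> hermitian_form V h
   \<and> (\<forall>x\<in>V. D x \<in> V)
   \<and> (\<forall>x\<in>V. \<forall>y\<in>V. D (cadd x y) = cadd (D x) (D y))
   \<and> (\<forall>c. \<forall>x\<in>V. D (cscale c x) = cscale c (D x))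
   \<and> (\<forall>x\<in>V. \<forall>y\<in>V. h (D x) y = h x (D y))
   \<and> (\<forall>k. e k \<in> V)
   \<and> (\<forall>j k. h (e j) (e k) = (if j = k then 1 else 0))
   \<and> (\<forall>k. D (e k) = cscale (complex_of_real (lam k)) (e k))
   \<and> (\<forall>x\<in>V. (\<lambda>n. sqnorm h (cdiff x (\<lambda>s. \<Sum>k<n. h x (e k) * e k s))) \<longlonglongrightarrow> 0)
   \<and> (\<forall>c::real. finite {k. \<bar>lam k\<bar> \<le> c})"

end

theory Submission
  imports Defs
begin


lemma lin_dep:
  fixes f :: "nat \<Rightarrow> nat \<Rightarrow> complex"
  assumes "finite K" "finite S" "card K < card S"
  shows "\<exists>c. (\<exists>l\<in>S. c l \<noteq> 0) \<and> (\<forall>k\<in>K. (\<Sum>l\<in>S. c l * f l k) = 0)"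
  using assms
proof (induction K arbitrary: S f rule: finite_induct)
  case empty
  then have "S \<noteq> {}" by auto
  then show ?case by (rule_tac x="\<lambda>_. 1" in exI) auto
next
  case (insert k K)
  show ?case
  proof (cases "\<forall>l\<in>S. f l k = 0")
    case True
    have "card K < card S" using insert by auto
    from insert.IH[OF insert.prems(1) this] obtain c where
      c: "(\<exists>l\<in>S. c l \<noteq> 0)" "(\<forall>k\<in>K. (\<Sum>l\<in>S. c l * f l k) = 0)" by blast
    show ?thesis using c True by (rule_tac x=c in exI) auto
  next
    case False
    then obtain l0 where l0: "l0 \<in> S" "f l0 k \<noteq> 0" by auto
    define S' where "S' = S - {l0}"
    define f' where "f' = (\<lambda>l j. f l j - f l k / f l0 k * f l0 j)"
    have cS': "card K < card S'" using insert l0 by (simp add: S'_def)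
    have fS': "finite S'" using insert by (simp add: S'_def)
    from insert.IH[OF fS' cS', of f'] obtain c' where
      c': "(\<exists>l\<in>S'. c' l \<noteq> 0)" "(\<forall>j\<in>K. (\<Sum>l\<in>S'. c' l * f' l j) = 0)" by blast
    define A where "A = (\<Sum>l\<in>S'. c' l * f l k)"
    define c where "c = c'(l0 := - A / f l0 k)"
    have l0S': "l0 \<notin> S'" by (simp add: S'_def)
    have split: "(\<Sum>l\<in>S. c l * f l j) = c l0 * f l0 j + (\<Sum>l\<in>S'. c' l * f l j)" for j
    proof -
      have "(\<Sum>l\<in>S. c l * f l j) = c l0 * f l0 j + (\<Sum>l\<in>S'. c l * f l j)"
        using l0 insert(4) by (simp add: S'_def sum.remove)
      also have "(\<Sum>l\<in>S'. c l * f l j) = (\<Sum>l\<in>S'. c' l * f l j)"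
        using l0S' by (intro sum.cong) (auto simp: c_def)
      finally show ?thesis .
    qed
    have "\<forall>j\<in>insert k K. (\<Sum>l\<in>S. c l * f l j) = 0"
    proof
      fix j assume j: "j \<in> insert k K"
      show "(\<Sum>l\<in>S. c l * f l j) = 0"
      proof (cases "j = k")
        case True
        then show ?thesis using l0 unfolding split by (simp add: c_def A_def)
      next
        case False
        then have jK: "j \<in> K" using j by auto
        have "0 = (\<Sum>l\<in>S'. c' l * f' l j)" using c' jK by auto
        also have "\<dots> = (\<Sum>l\<in>S'. c' l * f l j) - A / f l0 k * f l0 j"
          by (simp add: f'_def A_def algebra_simps sum_subtractf sum_distrib_left sum_divide_distrib sum_distrib_right)
        finally have "(\<Sum>l\<in>S'. c' l * f l j) = A / f l0 k * f l0 j" by simp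
        then show ?thesis unfolding split by (simp add: c_def)
      qed
    qed
    moreover have "\<exists>l\<in>S. c l \<noteq> 0" using c' l0S' by (auto simp: c_def S'_def)
    ultimately show ?thesis by blast
  qed
qed

lemma matching:
  fixes \<mu> lam :: "nat \<Rightarrow> real" and \<epsilon> :: real
  assumes "finite I"
    and fin: "\<And>a b. finite {k\<in>K. a \<le> lam k \<and> lam k \<le> b}"
    and hall: "\<And>\<alpha> \<beta>. card {l\<in>I. \<alpha> \<le> \<mu> l \<and> \<mu> l \<le> \<beta>}
                  \<le> card {k\<in>K. \<alpha> - \<epsilon> \<le> lam k \<and> lam k \<le> \<beta> + \<epsilon>}"
  shows "\<exists>\<kappa>. inj_on \<kappa> I \<and> \<kappa> ` I \<subseteq> K \<and> (\<forall>l\<in>I. \<bar>lam (\<kappa> l) - \<mu> l\<bar> \<le> \<epsilon>)"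
  using assms
proof (induction "card I" arbitrary: I K)
  case 0
  then have "I = {}" by auto
  then show ?case by auto
next
  case (Suc n)
  then have "I \<noteq> {}" by auto
  define m where "m = Min (\<mu> ` I)"
  have "m \<in> \<mu> ` I" unfolding m_def using Suc.prems(1) \<open>I \<noteq> {}\<close> by (intro Min_in) auto
  then obtain l0 where l0: "l0 \<in> I" "\<mu> l0 = m" by auto
  have l0min: "\<forall>l\<in>I. \<mu> l0 \<le> \<mu> l" using l0 Suc.prems(1) by (auto simp: m_def)
  define W where "W = {k\<in>K. \<mu> l0 - \<epsilon> \<le> lam k \<and> lam k \<le> \<mu> l0 + \<epsilon>}"
  have finW: "finite W" using Suc.prems(2) by (simp add: W_def)
  have "1 \<le> card {l\<in>I. \<mu> l0 \<le> \<mu> l \<and> \<mu> l \<le> \<mu> l0}"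
    proof -
    have "l0 \<in> {l\<in>I. \<mu> l0 \<le> \<mu> l \<and> \<mu> l \<le> \<mu> l0}" using l0 by auto
    then show ?thesis using Suc.prems(1)
      by (metis (no_types, lifting) One_nat_def Suc_leI card_gt_0_iff empty_iff finite_subset mem_Collect_eq subsetI)
  qed
  also have "\<dots> \<le> card W" unfolding W_def by (rule Suc.prems(3))
  finally have "W \<noteq> {}" by auto
  define m2 where "m2 = Min (lam ` W)"
  have "m2 \<in> lam ` W" unfolding m2_def using finW \<open>W \<noteq> {}\<close> by (intro Min_in) auto
  then obtain k0 where k0: "k0 \<in> W" "lam k0 = m2" by auto
  have k0min: "\<forall>k\<in>W. lam k0 \<le> lam k" using k0 finW by (auto simp: m2_def)
  define I' where "I' = I - {l0}"
  define K' where "K' = K - {k0}"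
  have cI': "n = card I'" using Suc.hyps(2) l0 Suc.prems(1) by (simp add: I'_def)
  have "\<exists>\<kappa>. inj_on \<kappa> I' \<and> \<kappa> ` I' \<subseteq> K' \<and> (\<forall>l\<in>I'. \<bar>lam (\<kappa> l) - \<mu> l\<bar> \<le> \<epsilon>)"
  proof (rule Suc.hyps(1)[OF cI'])
    show "finite I'" using Suc.prems(1) by (simp add: I'_def)
    show "finite {k\<in>K'. a \<le> lam k \<and> lam k \<le> b}" for a b
      using Suc.prems(2)[of a b] by (rule rev_finite_subset) (auto simp: K'_def)
    fix \<alpha> \<beta>
    define S where "S = {l\<in>I. \<alpha> \<le> \<mu> l \<and> \<mu> l \<le> \<beta>}"
    define T where "T = {k\<in>K. \<alpha> - \<epsilon> \<le> lam k \<and> lam k \<le> \<beta> + \<epsilon>}"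
    have eS: "{l\<in>I'. \<alpha> \<le> \<mu> l \<and> \<mu> l \<le> \<beta>} = S - {l0}" by (auto simp: S_def I'_def)
    have eT: "{k\<in>K'. \<alpha> - \<epsilon> \<le> lam k \<and> lam k \<le> \<beta> + \<epsilon>} = T - {k0}" by (auto simp: T_def K'_def)
    have fS: "finite S" using Suc.prems(1) by (simp add: S_def)
    have fT: "finite T" using Suc.prems(2) by (simp add: T_def)
    have ST: "card S \<le> card T" unfolding S_def T_def by (rule Suc.prems(3))
    show "card {l\<in>I'. \<alpha> \<le> \<mu> l \<and> \<mu> l \<le> \<beta>} \<le> card {k\<in>K'. \<alpha> - \<epsilon> \<le> lam k \<and> lam k \<le> \<beta> + \<epsilon>}"
      unfolding eS eT
    proof (cases "k0 \<in> T")
      case False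
      then show "card (S - {l0}) \<le> card (T - {k0})" using ST fS
        by (metis Diff_empty Diff_insert0 card_Diff1_le le_trans)
    next
      case kT: True
      show "card (S - {l0}) \<le> card (T - {k0})"
      proof (cases "l0 \<in> S")
        case True
        then show ?thesis using kT ST fS fT by (simp add: card_Diff_singleton)
      next
        case lS: False
        show ?thesis
        proof (cases "S = {}")
          case True then show ?thesis by simp
        next
          case False
          then obtain l1 where l1: "l1 \<in> S" by auto
          have "\<mu> l0 \<le> \<beta>" using l1 l0min by (auto simp: S_def)
          then have a: "\<mu> l0 < \<alpha>" using lS l0 by (auto simp: S_def)
          define S2 where "S2 = {l\<in>I. \<mu> l0 \<le> \<mu> l \<and> \<mu> l \<le> \<beta>}"
          define T2 where "T2 = {k\<in>K. \<mu> l0 - \<epsilon> \<le> lam k \<and> lam k \<le> \<beta> + \<epsilon>}"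
          have "insert l0 S \<subseteq> S2" using a \<open>\<mu> l0 \<le> \<beta>\<close> l0 by (auto simp: S_def S2_def)
          then have "card (insert l0 S) \<le> card S2"
            by (rule card_mono[rotated]) (use Suc.prems(1) in \<open>simp add: S2_def\<close>)
          then have 1: "card S + 1 \<le> card S2" using lS fS by simp
          have 2: "card S2 \<le> card T2" unfolding S2_def T2_def by (rule Suc.prems(3))
          have "T2 \<subseteq> T"
          proof
            fix k assume k: "k \<in> T2"
            show "k \<in> T"
            proof (rule ccontr)
              assume "k \<notin> T"
              then have "lam k < \<alpha> - \<epsilon>" using k by (auto simp: T_def T2_def)
              moreover have "\<alpha> - \<epsilon> \<le> lam k0" "lam k0 \<le> \<mu> l0 + \<epsilon>" using kT k0 by (auto simp: T_def W_def)
              ultimately have "k \<in> W" using k by (auto simp: T2_def W_def)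
              then show False using k0min \<open>lam k < \<alpha> - \<epsilon>\<close> \<open>\<alpha> - \<epsilon> \<le> lam k0\<close> by force
            qed
          qed
          then have "card T2 \<le> card T" using fT by (rule card_mono[rotated])
          then show ?thesis using 1 2 lS kT fT by (simp add: card_Diff_singleton)
        qed
      qed
    qed
  qed
  then obtain \<kappa>' where k': "inj_on \<kappa>' I'" "\<kappa>' ` I' \<subseteq> K'" "\<forall>l\<in>I'. \<bar>lam (\<kappa>' l) - \<mu> l\<bar> \<le> \<epsilon>"
    by blast
  define \<kappa> where "\<kappa> = \<kappa>'(l0 := k0)"
  have "I = insert l0 I'" using l0 by (auto simp: I'_def)
  have "inj_on \<kappa> I"
    unfolding \<open>I = insert l0 I'\<close> \<kappa>_def using k' by (auto simp: inj_on_def I'_def K'_def)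
  moreover have "\<kappa> ` I \<subseteq> K" using k' k0 unfolding \<open>I = insert l0 I'\<close> \<kappa>_def
    by (auto simp: I'_def K'_def W_def)
  moreover have "\<forall>l\<in>I. \<bar>lam (\<kappa> l) - \<mu> l\<bar> \<le> \<epsilon>" using k' k0 unfolding \<open>I = insert l0 I'\<close> \<kappa>_def
    by (auto simp: I'_def W_def)
  ultimately show ?case by blast
qed




locale dm =
  fixes V :: "('s \<Rightarrow> complex) set"
    and h :: "('s \<Rightarrow> complex) \<Rightarrow> ('s \<Rightarrow> complex) \<Rightarrow> complex"
    and D :: "('s \<Rightarrow> complex) \<Rightarrow> ('s \<Rightarrow> complex)"
    and e :: "nat \<Rightarrow> ('s \<Rightarrow> complex)"
    and lam :: "nat \<Rightarrow> real"
  assumes dm: "dirac_model V h D e lam"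
begin

lemma csub: "csubspace V" using dm unfolding dirac_model_def by auto
lemma herm: "hermitian_form V h" using dm unfolding dirac_model_def by auto
lemma zero_in: "(\<lambda>s. 0) \<in> V" using csub unfolding csubspace_def by auto
lemma add_in: "x \<in> V \<Longrightarrow> y \<in> V \<Longrightarrow> cadd x y \<in> V"
  using csub unfolding csubspace_def by auto
lemma scale_in: "x \<in> V \<Longrightarrow> cscale c x \<in> V"
  using csub unfolding csubspace_def by auto
lemma diff_eq: "cdiff x y = cadd x (cscale (-1) y)" by (simp add: cdiff_def cadd_def cscale_def)
lemma diff_in: "x \<in> V \<Longrightarrow> y \<in> V \<Longrightarrow> cdiff x y \<in> V"
  by (simp add: diff_eq add_in scale_in)
lemmas H = herm[unfolded hermitian_form_def]
lemma h_add1: "x \<in> V \<Longrightarrow> y \<in> V \<Longrightarrow> z \<in> V \<Longrightarrow> h (cadd x y) z = h x z + h y z"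
  using conjunct1[OF H] by blast
lemma h_scale1: "x \<in> V \<Longrightarrow> y \<in> V \<Longrightarrow> h (cscale c x) y = c * h x y"
  using conjunct1[OF conjunct2[OF H]] by blast
lemma h_sym: "x \<in> V \<Longrightarrow> y \<in> V \<Longrightarrow> h x y = cnj (h y x)"
  using conjunct1[OF conjunct2[OF conjunct2[OF H]]] by blast
lemma h_pos: "x \<in> V \<Longrightarrow> Re (h x x) \<ge> 0"
  using conjunct2[OF conjunct2[OF conjunct2[OF H]]] by blast
lemma h_def0: "x \<in> V \<Longrightarrow> h x x = 0 \<Longrightarrow> x = (\<lambda>s. 0)"
  using conjunct2[OF conjunct2[OF conjunct2[OF H]]] by blast
lemma h_add2: "x \<in> V \<Longrightarrow> y \<in> V \<Longrightarrow> z \<in> V \<Longrightarrow> h x (cadd y z) = h x y + h x z"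
proof -
  assume a: "x \<in> V" "y \<in> V" "z \<in> V"
  have "h x (cadd y z) = cnj (h (cadd y z) x)" using a by (intro h_sym) (simp_all add: add_in)
  also have "\<dots> = cnj (h y x) + cnj (h z x)" using a by (simp add: h_add1)
  also have "\<dots> = h x y + h x z" using a h_sym[of x y] h_sym[of x z] by simp
  finally show ?thesis .
qed
lemma h_scale2: "x \<in> V \<Longrightarrow> y \<in> V \<Longrightarrow> h x (cscale c y) = cnj c * h x y"
proof -
  assume a: "x \<in> V" "y \<in> V"
  have "h x (cscale c y) = cnj (h (cscale c y) x)" using a by (intro h_sym) (simp_all add: scale_in)
  also have "\<dots> = cnj c * cnj (h y x)" using a by (simp add: h_scale1)
  also have "\<dots> = cnj c * h x y" using a h_sym[of x y] by simp
  finally show ?thesis .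
qed
lemma h_diff1: "x \<in> V \<Longrightarrow> y \<in> V \<Longrightarrow> z \<in> V \<Longrightarrow> h (cdiff x y) z = h x z - h y z"
  by (simp add: diff_eq h_add1 scale_in h_scale1)
lemma h_diff2: "x \<in> V \<Longrightarrow> y \<in> V \<Longrightarrow> z \<in> V \<Longrightarrow> h x (cdiff y z) = h x y - h x z"
  by (simp add: diff_eq h_add2 scale_in h_scale2)
lemma h_real: "x \<in> V \<Longrightarrow> h x x = complex_of_real (Re (h x x))"
proof -
  assume a: "x \<in> V"
  have "Im (h x x) = Im (cnj (h x x))" using h_sym[OF a a] by simp
  then have "Im (h x x) = 0" by simp
  then show ?thesis by (simp add: complex_eq_iff)
qed
lemma D_in: "x \<in> V \<Longrightarrow> D x \<in> V"
  using dm unfolding dirac_model_def by auto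
lemma D_add: "x \<in> V \<Longrightarrow> y \<in> V \<Longrightarrow> D (cadd x y) = cadd (D x) (D y)"
  using dm unfolding dirac_model_def by auto
lemma D_scale: "x \<in> V \<Longrightarrow> D (cscale c x) = cscale c (D x)"
  using dm unfolding dirac_model_def by auto
lemma D_sym: "x \<in> V \<Longrightarrow> y \<in> V \<Longrightarrow> h (D x) y = h x (D y)"
  using dm unfolding dirac_model_def by auto
lemma e_in: "e k \<in> V"
  using dm unfolding dirac_model_def by auto
lemma e_on: "h (e j) (e k) = (if j = k then 1 else 0)"
  using dm unfolding dirac_model_def by auto
lemma D_e: "D (e k) = cscale (complex_of_real (lam k)) (e k)"
  using dm unfolding dirac_model_def by auto
lemma complete: "x \<in> V \<Longrightarrow> (\<lambda>n. sqnorm h (cdiff x (\<lambda>s. \<Sum>k<n. h x (e k) * e k s))) \<longlonglongrightarrow> 0"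
  using dm unfolding dirac_model_def by auto
lemma lam_fin: "finite {k. \<bar>lam k\<bar> \<le> c}"
  using dm unfolding dirac_model_def by auto

lemma D_zero: "D (\<lambda>s. 0) = (\<lambda>s. 0)"
proof -
  have "D (cscale 0 (\<lambda>s. 0)) = cscale 0 (D (\<lambda>s. 0))" by (rule D_scale[OF zero_in])
  then show ?thesis by (simp add: cscale_def)
qed

lemma h_zero1: "y \<in> V \<Longrightarrow> h (\<lambda>s. 0) y = 0"
  using h_scale1[of y y 0] by (simp add: cscale_def)

lemma sum_eq_ins: "(\<lambda>s. \<Sum>k\<in>insert a F. c k * f k s) = cadd (cscale (c a) (f a)) (\<lambda>s. \<Sum>k\<in>F. c k * f k s)"
  if "finite F" "a \<notin> F" for F a c f
  using that by (simp add: cadd_def cscale_def)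

lemma sum_in: "finite F \<Longrightarrow> (\<forall>k\<in>F. f k \<in> V) \<Longrightarrow> (\<lambda>s. \<Sum>k\<in>F. c k * f k s) \<in> V"
proof (induction F rule: finite_induct)
  case empty then show ?case using zero_in by simp
next
  case (insert a F)
  have eq: "(\<lambda>s. \<Sum>k\<in>insert a F. c k * f k s) = cadd (cscale (c a) (f a)) (\<lambda>s. \<Sum>k\<in>F. c k * f k s)"
    using insert(1,2) by (simp add: cadd_def cscale_def)
  show ?case unfolding eq using insert by (simp add: add_in scale_in)
qed

lemma h_sum1: "finite F \<Longrightarrow> (\<forall>k\<in>F. f k \<in> V) \<Longrightarrow> y \<in> V \<Longrightarrow>
   h (\<lambda>s. \<Sum>k\<in>F. c k * f k s) y = (\<Sum>k\<in>F. c k * h (f k) y)"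
proof (induction F rule: finite_induct)
  case empty then show ?case using h_zero1 by simp
next
  case (insert a F)
  have eq: "(\<lambda>s. \<Sum>k\<in>insert a F. c k * f k s) = cadd (cscale (c a) (f a)) (\<lambda>s. \<Sum>k\<in>F. c k * f k s)"
    using insert(1,2) by (simp add: cadd_def cscale_def)
  have sV: "(\<lambda>s. \<Sum>k\<in>F. c k * f k s) \<in> V" using insert by (intro sum_in) auto
  show ?case unfolding eq using insert sV by (simp add: h_add1 scale_in h_scale1)
qed

lemma h_sum2: "finite F \<Longrightarrow> (\<forall>k\<in>F. f k \<in> V) \<Longrightarrow> y \<in> V \<Longrightarrow>
   h y (\<lambda>s. \<Sum>k\<in>F. c k * f k s) = (\<Sum>k\<in>F. cnj (c k) * h y (f k))"
proof -
  assume a: "finite F" "\<forall>k\<in>F. f k \<in> V" "y \<in> V"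
  have "h y (\<lambda>s. \<Sum>k\<in>F. c k * f k s) = cnj (h (\<lambda>s. \<Sum>k\<in>F. c k * f k s) y)"
    using a by (intro h_sym) (simp_all add: sum_in)
  also have "\<dots> = cnj (\<Sum>k\<in>F. c k * h (f k) y)" using a by (simp add: h_sum1)
  also have "\<dots> = (\<Sum>k\<in>F. cnj (c k) * h y (f k))"
    using a by (simp add: h_sym[of y])
  finally show ?thesis .
qed

lemma D_sum: "finite F \<Longrightarrow> (\<forall>k\<in>F. f k \<in> V) \<Longrightarrow>
   D (\<lambda>s. \<Sum>k\<in>F. c k * f k s) = (\<lambda>s. \<Sum>k\<in>F. c k * D (f k) s)"
proof (induction F rule: finite_induct)
  case empty then show ?case using D_zero by simp
next
  case (insert a F)
  have eq: "(\<lambda>s. \<Sum>k\<in>insert a F. c k * f k s) = cadd (cscale (c a) (f a)) (\<lambda>s. \<Sum>k\<in>F. c k * f k s)"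
    using insert(1,2) by (simp add: cadd_def cscale_def)
  have sV: "(\<lambda>s. \<Sum>k\<in>F. c k * f k s) \<in> V" using insert by (intro sum_in) auto
  have "D (cadd (cscale (c a) (f a)) (\<lambda>s. \<Sum>k\<in>F. c k * f k s))
      = cadd (cscale (c a) (D (f a))) (\<lambda>s. \<Sum>k\<in>F. c k * D (f k) s)"
    using insert sV by (simp add: D_add scale_in D_scale)
  then show ?case unfolding eq using insert(1,2) by (simp add: cadd_def cscale_def)
qed

lemma h_De: "x \<in> V \<Longrightarrow> h (D x) (e k) = complex_of_real (lam k) * h x (e k)"
  by (simp add: D_sym e_in D_e h_scale2)

lemma parseval:
  assumes x: "x \<in> V"
  shows "(\<lambda>k. (cmod (h x (e k)))\<^sup>2) sums sqnorm h x"
proof -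
  define a where "a k = h x (e k)" for k
  define sn where "sn n = (\<lambda>s. \<Sum>k<n. a k * e k s)" for n
  have snV: "sn n \<in> V" for n unfolding sn_def by (rule sum_in) (auto simp: e_in)
  have cm: "a k * cnj (a k) = complex_of_real ((cmod (a k))\<^sup>2)" for k
    by (rule complex_norm_square[symmetric])
  have h1: "h (sn n) x = complex_of_real (\<Sum>k<n. (cmod (a k))\<^sup>2)" for n
  proof -
    have "h (sn n) x = (\<Sum>k<n. a k * h (e k) x)" unfolding sn_def by (rule h_sum1) (auto simp: e_in x)
    also have "\<dots> = (\<Sum>k<n. a k * cnj (a k))" by (simp add: a_def h_sym[OF e_in x])
    finally show ?thesis by (simp add: cm)
  qed
  have h2: "h x (sn n) = complex_of_real (\<Sum>k<n. (cmod (a k))\<^sup>2)" for n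
    using h_sym[OF x snV[of n]] h1[of n] by simp
  have h3: "h (sn n) (sn n) = complex_of_real (\<Sum>k<n. (cmod (a k))\<^sup>2)" for n
  proof -
    have "h (sn n) (sn n) = (\<Sum>k<n. a k * h (e k) (sn n))"
      by (subst (1) sn_def, rule h_sum1) (auto simp: e_in snV)
    also have "\<dots> = (\<Sum>k<n. a k * (\<Sum>j<n. cnj (a j) * h (e k) (e j)))"
      unfolding sn_def by (subst h_sum2) (auto simp: e_in)
    also have "\<dots> = (\<Sum>k<n. a k * cnj (a k))"
    proof (intro sum.cong refl)
      fix k assume k: "k \<in> {..<n}"
      have "(\<Sum>j<n. cnj (a j) * h (e k) (e j)) = (\<Sum>j<n. if k = j then cnj (a k) else 0)"
        by (intro sum.cong refl) (simp add: e_on)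
      also have "\<dots> = cnj (a k)" using k by simp
      finally show "a k * (\<Sum>j<n. cnj (a j) * h (e k) (e j)) = a k * cnj (a k)" by simp
    qed
    finally show ?thesis by (simp add: cm)
  qed
  have eq: "sqnorm h (cdiff x (sn n)) = sqnorm h x - (\<Sum>k<n. (cmod (a k))\<^sup>2)" for n
    unfolding sqnorm_def using x snV[of n]
    by (simp add: h_diff1 h_diff2 diff_in h1 h2 h3)
  have "(\<lambda>n. sqnorm h (cdiff x (sn n))) \<longlonglongrightarrow> 0" unfolding sn_def a_def by (rule complete[OF x])
  then have "(\<lambda>n. sqnorm h x - (sqnorm h x - (\<Sum>k<n. (cmod (a k))\<^sup>2))) \<longlonglongrightarrow> sqnorm h x - 0"
    unfolding eq by (intro tendsto_intros)
  then show ?thesis by (simp add: sums_def a_def)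
qed


definition Dg :: "real \<Rightarrow> ('s \<Rightarrow> complex) \<Rightarrow> ('s \<Rightarrow> complex)" where
  "Dg g x = cdiff (D x) (cscale (complex_of_real g) x)"

lemma Dg_in: "x \<in> V \<Longrightarrow> Dg g x \<in> V" by (simp add: Dg_def diff_in D_in scale_in)

lemma h_Dge: "x \<in> V \<Longrightarrow> h (Dg g x) (e k) = complex_of_real (lam k - g) * h x (e k)"
  by (simp add: Dg_def h_diff1 D_in scale_in e_in h_De h_scale1 algebra_simps)

lemma lower:
  assumes x: "x \<in> V" and nz: "x \<noteq> (\<lambda>s. 0)" and r: "r \<ge> 0"
    and gap: "\<And>k. \<bar>lam k - g\<bar> \<le> r \<Longrightarrow> h x (e k) = 0"
  shows "r\<^sup>2 * sqnorm h x < sqnorm h (Dg g x)"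
proof -
  define f where "f k = (lam k - g)\<^sup>2 * (cmod (h x (e k)))\<^sup>2 - r\<^sup>2 * (cmod (h x (e k)))\<^sup>2" for k
  have p1: "(\<lambda>k. (cmod (h (Dg g x) (e k)))\<^sup>2) sums sqnorm h (Dg g x)" by (rule parseval[OF Dg_in[OF x]])
  have p1': "(\<lambda>k. (lam k - g)\<^sup>2 * (cmod (h x (e k)))\<^sup>2) sums sqnorm h (Dg g x)"
  proof -
    have "(cmod (h (Dg g x) (e k)))\<^sup>2 = (lam k - g)\<^sup>2 * (cmod (h x (e k)))\<^sup>2" for k
      unfolding h_Dge[OF x] norm_mult norm_of_real power_mult_distrib by simp
    then show ?thesis using p1 by simp
  qed
  have p2: "(\<lambda>k. (cmod (h x (e k)))\<^sup>2) sums sqnorm h x" by (rule parseval[OF x])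
  have fs: "f sums (sqnorm h (Dg g x) - r\<^sup>2 * sqnorm h x)"
    unfolding f_def by (intro sums_diff p1' sums_mult p2)
  have fnn: "0 \<le> f k" for k
  proof (cases "\<bar>lam k - g\<bar> \<le> r")
    case True then show ?thesis using gap by (simp add: f_def)
  next
    case False
    then have "r \<le> \<bar>lam k - g\<bar>" by simp
    then have "r\<^sup>2 \<le> \<bar>lam k - g\<bar>\<^sup>2" using r by (intro power_mono) auto
    then have "r\<^sup>2 \<le> (lam k - g)\<^sup>2" by simp
    then show ?thesis by (simp add: f_def mult_right_mono flip: left_diff_distrib)
  qed
  have "\<exists>k. h x (e k) \<noteq> 0"
  proof (rule ccontr)
    assume "\<not> ?thesis"
    then have "(\<lambda>k. (cmod (h x (e k)))\<^sup>2) = (\<lambda>k. 0)" by auto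
    then have "sqnorm h x = 0" using p2 sums_unique2 sums_zero by metis
    then have "h x x = 0" using h_real[OF x] by (simp add: sqnorm_def)
    then show False using h_def0[OF x] nz by simp
  qed
  then obtain k where k: "h x (e k) \<noteq> 0" by auto
  then have "\<not> \<bar>lam k - g\<bar> \<le> r" using gap by auto
  then have "r < \<bar>lam k - g\<bar>" by simp
  then have "r\<^sup>2 < \<bar>lam k - g\<bar>\<^sup>2" using r by (intro power_strict_mono) auto
  then have "r\<^sup>2 < (lam k - g)\<^sup>2" by simp
  then have "0 < f k" using k by (simp add: f_def flip: left_diff_distrib)
  then have "0 < suminf f" using fs fnn by (intro suminf_pos2[of f k]) (auto simp: sums_summable)
  then show ?thesis using sums_unique[OF fs] by simp
qed


lemma norm_expand:
  assumes x: "x \<in> V" and y: "y \<in> V"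
  shows "Re (h (cadd x (cscale (complex_of_real t) y)) (cadd x (cscale (complex_of_real t) y)))
        = Re (h x x) + 2 * t * Re (h x y) + t\<^sup>2 * Re (h y y)"
proof -
  define T where "T = complex_of_real t"
  define a where "a = cadd x (cscale T y)"
  have ty: "cscale T y \<in> V" using y by (rule scale_in)
  have aV: "a \<in> V" using x ty by (simp add: a_def add_in)
  have "h a a = h x a + h (cscale T y) a" using h_add1[OF x ty aV] by (simp only: a_def)
  also have "h x a = h x x + cnj T * h x y" using x ty y
    by (simp add: a_def h_add2 h_scale2)
  also have "h (cscale T y) a = T * (h y x + cnj T * h y y)" using x ty y
    by (simp add: a_def h_scale1 aV h_add2 h_scale2 algebra_simps)
  finally have 1: "h a a = h x x + cnj T * h x y + T * (h y x + cnj T * h y y)" .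
  have 2: "h y x = cnj (h x y)" using h_sym y x by blast
  have 3: "cnj T = T" by (simp add: T_def)
  have "Re (h a a) = Re (h x x) + t * Re (h x y) + t * (Re (cnj (h x y)) + t * Re (h y y))"
    unfolding 1 2 3 by (simp add: T_def)
  then show ?thesis by (simp add: a_def T_def power2_eq_square algebra_simps)
qed

lemma sqnorm_lin:
  assumes S: "finite S" and psi: "\<forall>l\<in>S. \<psi> l \<in> V"
    and on: "\<forall>l\<in>S. \<forall>l'\<in>S. h (\<psi> l) (\<psi> l') = (if l = l' then 1 else 0)"
  shows "sqnorm h (\<lambda>s. \<Sum>l\<in>S. c l * \<psi> l s) = (\<Sum>l\<in>S. (cmod (c l))\<^sup>2)"
proof -
  have inV: "(\<lambda>s. \<Sum>l\<in>S. c l * \<psi> l s) \<in> V" by (rule sum_in[OF S psi])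
  have "h (\<lambda>s. \<Sum>l\<in>S. c l * \<psi> l s) (\<lambda>s. \<Sum>l\<in>S. c l * \<psi> l s)
      = (\<Sum>l\<in>S. c l * h (\<psi> l) (\<lambda>s. \<Sum>l\<in>S. c l * \<psi> l s))" by (rule h_sum1[OF S psi inV])
  also have "\<dots> = (\<Sum>l\<in>S. c l * (\<Sum>l'\<in>S. cnj (c l') * h (\<psi> l) (\<psi> l')))"
    using psi by (intro sum.cong refl) (simp add: h_sum2[OF S psi])
  also have "\<dots> = (\<Sum>l\<in>S. c l * cnj (c l))"
  proof (intro sum.cong refl)
    fix l assume l: "l \<in> S"
    have "(\<Sum>l'\<in>S. cnj (c l') * h (\<psi> l) (\<psi> l')) = (\<Sum>l'\<in>S. if l = l' then cnj (c l) else 0)"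
      using on l by (intro sum.cong refl) auto
    also have "\<dots> = cnj (c l)" using S l by simp
    finally show "c l * (\<Sum>l'\<in>S. cnj (c l') * h (\<psi> l) (\<psi> l')) = c l * cnj (c l)" by simp
  qed
  also have "\<dots> = (\<Sum>l\<in>S. complex_of_real ((cmod (c l))\<^sup>2))"
    by (intro sum.cong refl) (rule complex_norm_square[symmetric])
  also have "\<dots> = complex_of_real (\<Sum>l\<in>S. (cmod (c l))\<^sup>2)" by (rule of_real_sum[symmetric])
  finally show ?thesis by (simp add: sqnorm_def)
qed

end

locale dmpsi = dm V h D e lam for V :: "('s \<Rightarrow> complex) set" and h D e lam +
  fixes L :: nat and \<delta> :: real and \<psi> :: "nat \<Rightarrow> ('s \<Rightarrow> complex)" and \<mu> :: "nat \<Rightarrow> real"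
  assumes delta_nonneg: "\<delta> \<ge> 0"
    and psi_in: "\<forall>l\<in>{1..L}. \<psi> l \<in> V"
    and orthonormal: "\<forall>l\<in>{1..L}. \<forall>l'\<in>{1..L}. h (\<psi> l) (\<psi> l') = (if l = l' then 1 else 0)"
    and approx_eig: "\<forall>l\<in>{1..L}.
          sqnorm h (cdiff (D (\<psi> l)) (cscale (complex_of_real (\<mu> l)) (\<psi> l))) \<le> \<delta>"
    and off_diag: "\<forall>l\<in>{1..L}. \<forall>l'\<in>{1..L}. l \<noteq> l' \<longrightarrow> h (D (\<psi> l)) (\<psi> l') = 0"
    and cross_sum: "(\<Sum>l\<in>{1..L}. \<Sum>l'\<in>{1..L} - {l}. cmod (h (D (\<psi> l)) (D (\<psi> l')))) \<le> \<delta>"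
begin

lemma diag_bound:
  assumes l: "l \<in> {1..L}" and t: "\<bar>\<mu> l - g\<bar> \<le> \<rho>"
  shows "Re (h (Dg g (\<psi> l)) (Dg g (\<psi> l))) \<le> (\<rho> + sqrt (2 * \<delta>))\<^sup>2 - \<delta>"
proof -
  define p where "p = \<psi> l"
  define r where "r = cdiff (D p) (cscale (complex_of_real (\<mu> l)) p)"
  define t where "t = \<mu> l - g"
  have pV: "p \<in> V" using psi_in l by (simp add: p_def)
  have rV: "r \<in> V" using pV by (simp add: r_def diff_in D_in scale_in)
  have pp: "h p p = 1" using orthonormal l by (simp add: p_def)
  have rr: "Re (h r r) \<le> \<delta>" using approx_eig l by (simp add: r_def p_def sqnorm_def)
  have eq: "Dg g p = cadd r (cscale (complex_of_real t) p)"
    by (auto simp: Dg_def r_def t_def cdiff_def cadd_def cscale_def algebra_simps)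
  define s where "s = Re (h r p)"
  have "0 \<le> Re (h (cadd r (cscale (complex_of_real (-s)) p)) (cadd r (cscale (complex_of_real (-s)) p)))"
    using h_pos add_in scale_in rV pV by blast
  then have "s\<^sup>2 \<le> Re (h r r)" unfolding norm_expand[OF rV pV] using pp
    by (simp add: s_def power2_eq_square)
  then have s2: "s\<^sup>2 \<le> \<delta>" using rr by linarith
  have "\<bar>s\<bar>\<^sup>2 \<le> \<delta>" using s2 by simp
  then have "\<bar>s\<bar> \<le> sqrt \<delta>" by (rule real_le_rsqrt)
  also have "\<dots> \<le> sqrt (2 * \<delta>)" using delta_nonneg by simp
  finally have sa: "\<bar>s\<bar> \<le> sqrt (2 * \<delta>)" .
  have "Re (h (Dg g p) (Dg g p)) = Re (h r r) + 2 * t * s + t\<^sup>2"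
    unfolding eq norm_expand[OF rV pV] using pp by (simp add: s_def)
  also have "\<dots> \<le> \<delta> + 2 * \<rho> * sqrt (2 * \<delta>) + \<rho>\<^sup>2"
  proof -
    have "t * s \<le> \<bar>t\<bar> * \<bar>s\<bar>" by (metis abs_ge_self abs_mult)
    also have "\<dots> \<le> \<rho> * sqrt (2 * \<delta>)" using t sa by (intro mult_mono) (auto simp: t_def)
    finally have 1: "t * s \<le> \<rho> * sqrt (2 * \<delta>)" .
    have "\<bar>t\<bar>\<^sup>2 \<le> \<rho>\<^sup>2" using t by (intro power_mono) (auto simp: t_def)
    then have "t\<^sup>2 \<le> \<rho>\<^sup>2" by simp
    then show ?thesis using 1 rr by linarith
  qed
  also have "\<dots> = (\<rho> + sqrt (2 * \<delta>))\<^sup>2 - \<delta>"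
    using delta_nonneg by (simp add: power2_eq_square algebra_simps)
  finally show ?thesis by (simp add: p_def)
qed


lemma upper:
  assumes S: "S \<subseteq> {1..L}" and mu: "\<forall>l\<in>S. \<bar>\<mu> l - g\<bar> \<le> \<rho>"
  shows "sqnorm h (Dg g (\<lambda>s. \<Sum>l\<in>S. c l * \<psi> l s)) \<le> (\<rho> + sqrt (2 * \<delta>))\<^sup>2 * (\<Sum>l\<in>S. (cmod (c l))\<^sup>2)"
proof -
  define K where "K = (\<rho> + sqrt (2 * \<delta>))\<^sup>2 - \<delta>"
  define C where "C = (\<Sum>l\<in>S. (cmod (c l))\<^sup>2)"
  define P where "P l = Dg g (\<psi> l)" for l
  define G where "G l l' = h (P l) (P l')" for l l'
  have fS: "finite S" using S finite_subset by blast
  have psiS: "\<forall>l\<in>S. \<psi> l \<in> V" using S psi_in by auto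
  have PV: "\<forall>l\<in>S. P l \<in> V" using psiS by (simp add: P_def Dg_in)
  have eqD: "Dg g (\<lambda>s. \<Sum>l\<in>S. c l * \<psi> l s) = (\<lambda>s. \<Sum>l\<in>S. c l * P l s)"
    using fS psiS
    by (simp add: P_def Dg_def cdiff_def cscale_def D_sum sum_subtractf sum_distrib_left algebra_simps)
  have "h (\<lambda>s. \<Sum>l\<in>S. c l * P l s) (\<lambda>s. \<Sum>l\<in>S. c l * P l s)
      = (\<Sum>l\<in>S. c l * h (P l) (\<lambda>s. \<Sum>l\<in>S. c l * P l s))" by (rule h_sum1[OF fS PV sum_in[OF fS PV]])
  also have "\<dots> = (\<Sum>l\<in>S. \<Sum>l'\<in>S. c l * (cnj (c l') * G l l'))"
    using PV by (intro sum.cong refl) (simp add: h_sum2[OF fS PV] G_def sum_distrib_left)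
  finally have hh: "h (Dg g (\<lambda>s. \<Sum>l\<in>S. c l * \<psi> l s)) (Dg g (\<lambda>s. \<Sum>l\<in>S. c l * \<psi> l s))
      = (\<Sum>l\<in>S. \<Sum>l'\<in>S. c l * (cnj (c l') * G l l'))" unfolding eqD .
  have off: "G l l' = h (D (\<psi> l)) (D (\<psi> l'))" if l: "l \<in> S" "l' \<in> S" "l \<noteq> l'" for l l'
  proof -
    have a: "\<psi> l \<in> V" "\<psi> l' \<in> V" using l psiS by auto
    have b: "h (D (\<psi> l)) (\<psi> l') = 0" using off_diag l S by auto
    have c: "h (\<psi> l) (D (\<psi> l')) = 0" using b D_sym[OF a] by simp
    have lL: "l \<in> {1..L}" "l' \<in> {1..L}" using l S by auto
    have d: "h (\<psi> l) (\<psi> l') = 0" using orthonormal lL l(3) by simp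
    show ?thesis using a b c d
      by (simp add: G_def P_def Dg_def h_diff1 h_diff2 h_scale1 h_scale2 D_in scale_in diff_in)
  qed
  have cC: "(cmod (c l))\<^sup>2 \<le> C" if "l \<in> S" for l
    unfolding C_def using fS that by (intro member_le_sum) auto
  have cc: "cmod (c l) * cmod (c l') \<le> C" if "l \<in> S" "l' \<in> S" for l l'
  proof -
    have "2 * (cmod (c l) * cmod (c l')) \<le> (cmod (c l))\<^sup>2 + (cmod (c l'))\<^sup>2"
      using sum_squares_bound[of "cmod (c l)" "cmod (c l')"] by (simp add: power2_eq_square)
    then show ?thesis using cC[OF that(1)] cC[OF that(2)] by linarith
  qed
  have Cnn: "0 \<le> C" unfolding C_def by (intro sum_nonneg) auto
  have per_l: "Re (\<Sum>l'\<in>S. c l * (cnj (c l') * G l l'))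
      \<le> (cmod (c l))\<^sup>2 * K + C * (\<Sum>l'\<in>S - {l}. cmod (h (D (\<psi> l)) (D (\<psi> l'))))" if l: "l \<in> S" for l
  proof -
    have "Re (\<Sum>l'\<in>S. c l * (cnj (c l') * G l l'))
        = Re (c l * (cnj (c l) * G l l)) + (\<Sum>l'\<in>S - {l}. Re (c l * (cnj (c l') * G l l')))"
      using fS l by (simp add: sum.remove Re_sum)
    also have "Re (c l * (cnj (c l) * G l l)) = (cmod (c l))\<^sup>2 * Re (G l l)"
    proof -
      have "c l * (cnj (c l) * G l l) = complex_of_real ((cmod (c l))\<^sup>2) * G l l"
        by (subst complex_norm_square) (simp add: mult.assoc)
      moreover have "Re (complex_of_real r * z) = r * Re z" for r z by simp
      ultimately show ?thesis by metis
    qed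
    also have "\<dots> \<le> (cmod (c l))\<^sup>2 * K"
      using diag_bound[of l g \<rho>] l S mu by (intro mult_left_mono) (auto simp: G_def P_def K_def)
    also have "(\<Sum>l'\<in>S - {l}. Re (c l * (cnj (c l') * G l l')))
        \<le> (\<Sum>l'\<in>S - {l}. C * cmod (h (D (\<psi> l)) (D (\<psi> l'))))"
    proof (intro sum_mono)
      fix l' assume l': "l' \<in> S - {l}"
      have "Re (c l * (cnj (c l') * G l l')) \<le> cmod (c l * (cnj (c l') * G l l'))" by (rule complex_Re_le_cmod)
      also have "\<dots> = cmod (c l) * cmod (c l') * cmod (G l l')" by (simp add: norm_mult)
      also have "\<dots> \<le> C * cmod (G l l')" using cc[of l l'] l l' by (intro mult_right_mono) auto
      also have "C * cmod (G l l') = C * cmod (h (D (\<psi> l)) (D (\<psi> l')))" using off[of l l'] l l' by auto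
      finally show "Re (c l * (cnj (c l') * G l l')) \<le> C * cmod (h (D (\<psi> l)) (D (\<psi> l')))" .
    qed
    finally show ?thesis by (simp add: sum_distrib_left)
  qed
  have "sqnorm h (Dg g (\<lambda>s. \<Sum>l\<in>S. c l * \<psi> l s)) = (\<Sum>l\<in>S. Re (\<Sum>l'\<in>S. c l * (cnj (c l') * G l l')))"
    unfolding sqnorm_def hh by (simp add: Re_sum)
  also have "\<dots> \<le> (\<Sum>l\<in>S. (cmod (c l))\<^sup>2 * K + C * (\<Sum>l'\<in>S - {l}. cmod (h (D (\<psi> l)) (D (\<psi> l')))))"
    by (intro sum_mono per_l)
  also have "\<dots> = C * K + C * (\<Sum>l\<in>S. \<Sum>l'\<in>S - {l}. cmod (h (D (\<psi> l)) (D (\<psi> l'))))"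
    by (simp add: sum.distrib C_def sum_distrib_left sum_distrib_right)
  also have "(\<Sum>l\<in>S. \<Sum>l'\<in>S - {l}. cmod (h (D (\<psi> l)) (D (\<psi> l'))))
      \<le> (\<Sum>l\<in>{1..L}. \<Sum>l'\<in>{1..L} - {l}. cmod (h (D (\<psi> l)) (D (\<psi> l'))))"
  proof -
    have "(\<Sum>l\<in>S. \<Sum>l'\<in>S - {l}. cmod (h (D (\<psi> l)) (D (\<psi> l'))))
        \<le> (\<Sum>l\<in>S. \<Sum>l'\<in>{1..L} - {l}. cmod (h (D (\<psi> l)) (D (\<psi> l'))))"
      using S by (intro sum_mono sum_mono2) auto
    also have "\<dots> \<le> (\<Sum>l\<in>{1..L}. \<Sum>l'\<in>{1..L} - {l}. cmod (h (D (\<psi> l)) (D (\<psi> l'))))"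
      using S by (intro sum_mono2) (auto intro: sum_nonneg)
    finally show ?thesis .
  qed
  also have "\<dots> \<le> \<delta>" by (rule cross_sum)
  finally have "sqnorm h (Dg g (\<lambda>s. \<Sum>l\<in>S. c l * \<psi> l s)) \<le> C * K + C * \<delta>"
    using Cnn by (simp add: mult_left_mono)
  also have "C * K + C * \<delta> = (\<rho> + sqrt (2 * \<delta>))\<^sup>2 * C" by (simp add: K_def algebra_simps)
  finally show ?thesis by (simp add: C_def)
qed


lemma hall_count:
  "card {l\<in>{1..L}. \<alpha> \<le> \<mu> l \<and> \<mu> l \<le> \<beta>}
     \<le> card {k. \<alpha> - sqrt (2 * \<delta>) \<le> lam k \<and> lam k \<le> \<beta> + sqrt (2 * \<delta>)}"
proof (rule ccontr)
  define \<epsilon> where "\<epsilon> = sqrt (2 * \<delta>)"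
  define S where "S = {l\<in>{1..L}. \<alpha> \<le> \<mu> l \<and> \<mu> l \<le> \<beta>}"
  define K where "K = {k. \<alpha> - \<epsilon> \<le> lam k \<and> lam k \<le> \<beta> + \<epsilon>}"
  assume "\<not> ?thesis"
  then have lt: "card K < card S" by (simp add: S_def K_def \<epsilon>_def)
  have fS: "finite S" by (simp add: S_def)
  have fK: "finite K"
    by (rule finite_subset[OF _ lam_fin[of "\<bar>\<alpha> - \<epsilon>\<bar> + \<bar>\<beta> + \<epsilon>\<bar>"]]) (auto simp: K_def)
  obtain c where c: "\<exists>l\<in>S. c l \<noteq> 0" "\<forall>k\<in>K. (\<Sum>l\<in>S. c l * h (\<psi> l) (e k)) = 0"
    using lin_dep[OF fK fS lt, of "\<lambda>l k. h (\<psi> l) (e k)"] by blast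
  have SL: "S \<subseteq> {1..L}" by (auto simp: S_def)
  have psiS: "\<forall>l\<in>S. \<psi> l \<in> V" using SL psi_in by auto
  have onS: "\<forall>l\<in>S. \<forall>l'\<in>S. h (\<psi> l) (\<psi> l') = (if l = l' then 1 else 0)" using SL orthonormal by blast
  define \<phi> where "\<phi> = (\<lambda>s. \<Sum>l\<in>S. c l * \<psi> l s)"
  have \<phi>V: "\<phi> \<in> V" unfolding \<phi>_def by (rule sum_in[OF fS psiS])
  have nrm: "sqnorm h \<phi> = (\<Sum>l\<in>S. (cmod (c l))\<^sup>2)" unfolding \<phi>_def by (rule sqnorm_lin[OF fS psiS onS])
  have pos: "0 < (\<Sum>l\<in>S. (cmod (c l))\<^sup>2)"
  proof -
    obtain l where l: "l \<in> S" "c l \<noteq> 0" using c(1) by blast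
    have "0 < (cmod (c l))\<^sup>2" using l by simp
    also have "\<dots> \<le> (\<Sum>l\<in>S. (cmod (c l))\<^sup>2)" using fS l by (intro member_le_sum) auto
    finally show ?thesis .
  qed
  have nz: "\<phi> \<noteq> (\<lambda>s. 0)"
  proof
    assume "\<phi> = (\<lambda>s. 0)"
    then have "sqnorm h \<phi> = 0" using h_zero1[OF zero_in] by (simp add: sqnorm_def)
    then show False using nrm pos by simp
  qed
  have "\<alpha> \<le> \<beta>" using c(1) by (auto simp: S_def)
  define g where "g = (\<alpha> + \<beta>) / 2"
  define \<rho> where "\<rho> = (\<beta> - \<alpha>) / 2"
  have rho: "0 \<le> \<rho>" using \<open>\<alpha> \<le> \<beta>\<close> by (simp add: \<rho>_def)
  have eps: "0 \<le> \<epsilon>" using delta_nonneg by (simp add: \<epsilon>_def)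
  have mu: "\<forall>l\<in>S. \<bar>\<mu> l - g\<bar> \<le> \<rho>" unfolding abs_le_iff by (auto simp: S_def g_def \<rho>_def field_simps)
  have gap: "h \<phi> (e k) = 0" if "\<bar>lam k - g\<bar> \<le> \<rho> + \<epsilon>" for k
  proof -
    have "k \<in> K" using that unfolding abs_le_iff by (auto simp: K_def g_def \<rho>_def field_simps)
    then have "(\<Sum>l\<in>S. c l * h (\<psi> l) (e k)) = 0" using c(2) by blast
    then show ?thesis unfolding \<phi>_def by (simp add: h_sum1[OF fS psiS e_in])
  qed
  have "(\<rho> + \<epsilon>)\<^sup>2 * sqnorm h \<phi> < sqnorm h (Dg g \<phi>)"
    by (rule lower[OF \<phi>V nz _ gap]) (use rho eps in simp)
  moreover have "sqnorm h (Dg g \<phi>) \<le> (\<rho> + \<epsilon>)\<^sup>2 * (\<Sum>l\<in>S. (cmod (c l))\<^sup>2)"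
    unfolding \<phi>_def \<epsilon>_def by (rule upper[OF SL mu])
  ultimately show False unfolding nrm by simp
qed

end

theorem lemma6p4:
  fixes V :: "('s \<Rightarrow> complex) set"
    and h :: "('s \<Rightarrow> complex) \<Rightarrow> ('s \<Rightarrow> complex) \<Rightarrow> complex"
    and D :: "('s \<Rightarrow> complex) \<Rightarrow> ('s \<Rightarrow> complex)"
    and e :: "nat \<Rightarrow> ('s \<Rightarrow> complex)"
    and lam :: "nat \<Rightarrow> real"
    and L :: nat
    and \<delta> :: real
    and \<psi> :: "nat \<Rightarrow> ('s \<Rightarrow> complex)"
    and \<mu> :: "nat \<Rightarrow> real"
  assumes dirac: "dirac_model V h D e lam"
    and delta_nonneg: "\<delta> \<ge> 0"
    and psi_in: "\<forall>l\<in>{1..L}. \<psi> l \<in> V"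
    and orthonormal: "\<forall>l\<in>{1..L}. \<forall>l'\<in>{1..L}. h (\<psi> l) (\<psi> l') = (if l = l' then 1 else 0)"
    and approx_eig: "\<forall>l\<in>{1..L}.
          sqnorm h (cdiff (D (\<psi> l)) (cscale (complex_of_real (\<mu> l)) (\<psi> l))) \<le> \<delta>"
    and off_diag: "\<forall>l\<in>{1..L}. \<forall>l'\<in>{1..L}. l \<noteq> l' \<longrightarrow> h (D (\<psi> l)) (\<psi> l') = 0"
    and cross_sum: "(\<Sum>l\<in>{1..L}. \<Sum>l'\<in>{1..L} - {l}. cmod (h (D (\<psi> l)) (D (\<psi> l')))) \<le> \<delta>"
  shows "\<exists>\<kappa> :: nat \<Rightarrow> nat. inj_on \<kappa> {1..L} \<and>
           (\<forall>l\<in>{1..L}. \<bar>lam (\<kappa> l) - \<mu> l\<bar> \<le> sqrt (2 * \<delta>))"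
  proof -
  have P: "dmpsi V h D e lam L \<delta> \<psi> \<mu>"
    unfolding dmpsi_def dmpsi_axioms_def dm_def
    using dirac delta_nonneg psi_in orthonormal approx_eig off_diag cross_sum by blast
  interpret P: dmpsi V h D e lam L \<delta> \<psi> \<mu> by (rule P)
  have "\<exists>\<kappa>. inj_on \<kappa> {1..L} \<and> \<kappa> ` {1..L} \<subseteq> UNIV \<and> (\<forall>l\<in>{1..L}. \<bar>lam (\<kappa> l) - \<mu> l\<bar> \<le> sqrt (2 * \<delta>))"
  proof (rule matching)
    show "finite {1..L}" by simp
    show "finite {k \<in> UNIV. a \<le> lam k \<and> lam k \<le> b}" for a b
      by (rule finite_subset[OF _ P.lam_fin[of "\<bar>a\<bar> + \<bar>b\<bar>"]]) auto
    show "card {l \<in> {1..L}. \<alpha> \<le> \<mu> l \<and> \<mu> l \<le> \<beta>}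
        \<le> card {k \<in> UNIV. \<alpha> - sqrt (2 * \<delta>) \<le> lam k \<and> lam k \<le> \<beta> + sqrt (2 * \<delta>)}" for \<alpha> \<beta>
      using P.hall_count[of \<alpha> \<beta>] by simp
  qed
  then show ?thesis by blast
qed

end
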